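(* The $(1,2)$ Las Vegas elitist black-box complexity of $\textsc{OneMax}$ is at most $2n+1$, and the corresponding algorithm needs at most $n+1$ generations. For every $\lambda\ge 2$ there are $(1,\lambda)$ Las Vegas and Monte Carlo elitist black-box algorithms that need at most $\lceil n/\lfloor\log_2\lambda\rfloor\rceil$ generations on $\textsc{OneMax}$.
   Context: For $z\in\{0,1\}^n$, $\textsc{Om}_z(x)=n-\sum_{i=1}^n (x_i\oplus z_i)$; $\textsc{OneMax}=\{\textsc{Om}_z : z\in\{0,1\}^n\}$. A $(\mu,\lambda)$ elitist black-box algorithm maintains a multiset $X$ of $\mu$ search points (initially sampled one by one, each from a distribution depending only on previous points and the ranking of their fitness values); in each generation it samples $\lambda$ offspring from a distribution depending only on $X$ and the ranking of the fitness values in $X$ (not the values), learns the ranking of the offspring's fitness values, and the new $X$ must consist of $\mu$ offspring of highest fitness among the $\lambda$ offspring (ties broken arbitrarily; the parents are discarded). Runtime: number of sampled search points until an optimum is sampled for the first time; number of generations counted analogously. Las Vegas complexity: min over algorithms of max over functions of expected runtime. *)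

theory Defs
  imports "HOL-Probability.Probability"
begin

definition om :: "bool list \<Rightarrow> bool list \<Rightarrow> nat" where
  "om z x = length z - card {i. i < length z \<and> x ! i \<noteq> z ! i}"

definition is_opt :: "nat \<Rightarrow> (bool list \<Rightarrow> nat) \<Rightarrow> bool list \<Rightarrow> bool" where
  "is_opt n f x \<longleftrightarrow> length x = n \<and> (\<forall>y. length y = n \<longrightarrow> f y \<le> f x)"

definition rank :: "(bool list \<Rightarrow> nat) \<Rightarrow> bool list list \<Rightarrow> (nat \<times> nat) set" where
  "rank f ys = {(i, j). i < length ys \<and> j < length ys \<and> f (ys ! i) \<le> f (ys ! j)}"

text \<open>A (1,lambda) elitist algorithm: the initial search point is sampled from a fixed
  distribution (there is no information yet); in each generation the lambda offspring
  are sampled from a distribution depending only on the current parent x (the ranking of a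
  single point is trivial); after learning the ranking of the offspring, the algorithm
  selects (possibly randomly, depending on x, the offspring and their ranking) the index
  of the new parent, which must be an offspring of highest fitness. The parent is discarded.\<close>
record alg1 =
  a_init :: "bool list pmf"
  a_off  :: "bool list \<Rightarrow> bool list list pmf"
  a_sel  :: "bool list \<Rightarrow> bool list list \<Rightarrow> (nat \<times> nat) set \<Rightarrow> nat pmf"

definition valid_alg1 :: "nat \<Rightarrow> nat \<Rightarrow> alg1 \<Rightarrow> bool" where
  "valid_alg1 n lam A \<longleftrightarrow>
     (\<forall>x \<in> set_pmf (a_init A). length x = n) \<and>
     (\<forall>x. length x = n \<longrightarrow>
        (\<forall>ys \<in> set_pmf (a_off A x). length ys = lam \<and> (\<forall>y \<in> set ys. length y = n))) \<and>
     (\<forall>x ys (f :: bool list \<Rightarrow> nat). length x = n \<longrightarrow> length ys = lam \<longrightarrow>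
        (\<forall>y \<in> set ys. length y = n) \<longrightarrow>
        set_pmf (a_sel A x ys (rank f ys)) \<subseteq> {i. i < lam \<and> (\<forall>j < lam. f (ys ! j) \<le> f (ys ! i))})"

text \<open>State after t generations: \<open>Inl x\<close> = optimum not yet sampled, current parent x;
  \<open>Inr (r, g)\<close> = an optimum was sampled for the first time as the r-th sampled search point,
  in generation g (g = 0 means the initial search point; generations are counted without
  the initialization). Offspring of a generation are counted in the order in which they
  appear in the sampled list.\<close>

definition step1 :: "nat \<Rightarrow> nat \<Rightarrow> (bool list \<Rightarrow> nat) \<Rightarrow> alg1 \<Rightarrow> nat
    \<Rightarrow> bool list + nat \<times> nat \<Rightarrow> (bool list + nat \<times> nat) pmf" where
  "step1 n lam f A g s = (case s of
     Inr res \<Rightarrow> return_pmf (Inr res)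
   | Inl x \<Rightarrow> bind_pmf (a_off A x) (\<lambda>ys.
       if (\<exists>y \<in> set ys. is_opt n f y)
       then return_pmf (Inr (1 + lam * g + Suc (LEAST i. i < length ys \<and> is_opt n f (ys ! i)), Suc g))
       else map_pmf (\<lambda>i. Inl (ys ! i)) (a_sel A x ys (rank f ys))))"

fun state1 :: "nat \<Rightarrow> nat \<Rightarrow> (bool list \<Rightarrow> nat) \<Rightarrow> alg1 \<Rightarrow> nat \<Rightarrow> (bool list + nat \<times> nat) pmf" where
  "state1 n lam f A 0 = map_pmf (\<lambda>x. if is_opt n f x then Inr (1, 0) else Inl x) (a_init A)"
| "state1 n lam f A (Suc g) = bind_pmf (state1 n lam f A g) (step1 n lam f A g)"

text \<open>\<open>Pr[T \<le> m]\<close> and \<open>Pr[G \<le> k]\<close> for the runtime T and the number of generations G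
  (probability that this has happened within some finite number of generations).\<close>
definition runtime_le :: "nat \<Rightarrow> nat \<Rightarrow> (bool list \<Rightarrow> nat) \<Rightarrow> alg1 \<Rightarrow> nat \<Rightarrow> ennreal" where
  "runtime_le n lam f A m =
     (SUP t. ennreal (measure_pmf.prob (state1 n lam f A t) {s. \<exists>r g. s = Inr (r, g) \<and> r \<le> m}))"

definition gens_le :: "nat \<Rightarrow> nat \<Rightarrow> (bool list \<Rightarrow> nat) \<Rightarrow> alg1 \<Rightarrow> nat \<Rightarrow> ennreal" where
  "gens_le n lam f A k =
     (SUP t. ennreal (measure_pmf.prob (state1 n lam f A t) {s. \<exists>r g. s = Inr (r, g) \<and> g \<le> k}))"

text \<open>Expectations of nonnegative integer random variables: \<open>E[T] = \<Sum>_{m\<ge>0} Pr[T > m]\<close>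
  (this is \<infinity> if the optimum is not found with probability 1).\<close>
definition exp_runtime :: "nat \<Rightarrow> nat \<Rightarrow> (bool list \<Rightarrow> nat) \<Rightarrow> alg1 \<Rightarrow> ennreal" where
  "exp_runtime n lam f A = (\<Sum>m. 1 - runtime_le n lam f A m)"

definition exp_gens :: "nat \<Rightarrow> nat \<Rightarrow> (bool list \<Rightarrow> nat) \<Rightarrow> alg1 \<Rightarrow> ennreal" where
  "exp_gens n lam f A = (\<Sum>k. 1 - gens_le n lam f A k)"

definition LV_complexity_OM :: "nat \<Rightarrow> nat \<Rightarrow> ennreal" where
  "LV_complexity_OM n lam =
     (INF A \<in> {A. valid_alg1 n lam A}. SUP z \<in> {z. length z = n}. exp_runtime n lam (om z) A)"

end

theory Submission
  imports Defs
begin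

definition hdist :: "bool list \<Rightarrow> bool list \<Rightarrow> nat" where
  "hdist a b = length (filter (\<lambda>(u,v). u \<noteq> v) (zip a b))"

lemma hdist_card: "length a = length b \<Longrightarrow> card {i. i < length b \<and> a!i \<noteq> b!i} = hdist a b"
  unfolding hdist_def length_filter_conv_card by (auto intro!: arg_cong[where f=card] simp: nth_zip)

lemma om_hdist: "length y = length z \<Longrightarrow> om z y = length z - hdist y z"
  unfolding om_def using hdist_card[of y z] by simp

lemma hdist_append: "length a = length c \<Longrightarrow> hdist (a@b) (c@d) = hdist a c + hdist b d"
  by (simp add: hdist_def zip_append)

lemma hdist_self[simp]: "hdist a a = 0"
  by (induct a) (auto simp: hdist_def)

lemma hdist_le: "hdist a b \<le> length b"
  unfolding hdist_def by (rule order_trans[OF length_filter_le]) simp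

lemma hdist_0:
  assumes l: "length a = length b" and h: "hdist a b = 0" shows "a = b"
proof (rule nth_equalityI)
  show "length a = length b" by (rule l)
  have c: "card {i. i < length b \<and> a!i \<noteq> b!i} = 0" using hdist_card[OF l] h by linarith
  have fin: "finite {i. i < length b \<and> a!i \<noteq> b!i}"
    by (rule finite_subset[of _ "{..<length b}"]) auto
  have e: "{i. i < length b \<and> a!i \<noteq> b!i} = {}" using card_0_eq[OF fin] c by blast
  fix k assume k: "k < length a"
  have "k \<notin> {i. i < length b \<and> a!i \<noteq> b!i}" using e by simp
  thus "a ! k = b ! k" using k l by simp
qed

lemma is_opt_om: "length z = n \<Longrightarrow> is_opt n (om z) y \<longleftrightarrow> y = z"
proof
  assume l: "length z = n" and o: "is_opt n (om z) y"
  hence ly: "length y = n" by (simp add: is_opt_def)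
  have "om z z \<le> om z y" using o l by (simp add: is_opt_def)
  hence "hdist y z = 0" using om_hdist[of y z] om_hdist[of z z] l ly hdist_le[of y z] by simp
  thus "y = z" using hdist_0 l ly by simp
next
  assume l: "length z = n" and "y = z"
  thus "is_opt n (om z) y" using om_hdist l by (simp add: is_opt_def om_def)
qed

lemma length_n_lists: "length (List.n_lists j xs) = length xs ^ j"
  by (induct j) (auto simp: length_concat comp_def sum_list_triv)

definition mk :: "nat \<Rightarrow> bool list" where
  "mk m = (if m = 0 then [] else True # replicate (m-1) False)"

lemma length_mk[simp]: "length (mk m) = m" by (simp add: mk_def)

definition dec :: "bool list \<Rightarrow> bool list" where
  "dec x = rev (tl (dropWhile Not (rev x)))"

lemma dw_aux: "dropWhile Not (replicate k False @ True # q) = True # q"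
  by (induct k) auto

lemma dec_mk: "m > 0 \<Longrightarrow> dec (p @ mk m) = p"
  by (simp add: dec_def mk_def dw_aux)

lemma length_dec: "length (dec x) \<le> length x"
proof -
  have "length (dropWhile Not (rev x)) \<le> length x" using length_dropWhile_le[of Not "rev x"] by simp
  thus ?thesis by (simp add: dec_def)
qed

definition offs :: "nat \<Rightarrow> nat \<Rightarrow> nat \<Rightarrow> bool list \<Rightarrow> bool list list" where
  "offs n lam K x = (let p = dec x; i = length p; j = min K (n - i); L = List.n_lists j [True,False]
     in map (\<lambda>c. p @ L ! (c mod length L) @ mk (n - i - j)) [0..<lam])"

definition selm :: "nat \<Rightarrow> (nat \<times> nat) set \<Rightarrow> nat" where
  "selm lam R = (LEAST i. i < lam \<and> (\<forall>j<lam. (j,i) \<in> R))"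

definition algK :: "nat \<Rightarrow> nat \<Rightarrow> nat \<Rightarrow> alg1" where
  "algK n lam K = \<lparr>a_init = return_pmf (mk n), a_off = (\<lambda>x. return_pmf (offs n lam K x)),
     a_sel = (\<lambda>x ys R. return_pmf (selm lam R))\<rparr>"

lemma selm_best:
  fixes f :: "bool list \<Rightarrow> nat"
  assumes "length ys = lam" "lam > 0"
  shows "selm lam (rank f ys) < lam \<and> (\<forall>j<lam. f (ys!j) \<le> f (ys ! selm lam (rank f ys)))"
proof -
  let ?S = "(\<lambda>j. f (ys!j)) ` {..<lam}"
  have "Max ?S \<in> ?S" using assms by (intro Max_in) auto
  then obtain i where i: "i < lam" "f (ys!i) = Max ?S" by auto
  have "\<forall>j<lam. f (ys!j) \<le> f (ys!i)" using i by (auto intro: Max_ge)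
  hence ex: "\<exists>i. i < lam \<and> (\<forall>j<lam. (j,i) \<in> rank f ys)" using i assms by (auto simp: rank_def)
  have "selm lam (rank f ys) < lam \<and> (\<forall>j<lam. (j, selm lam (rank f ys)) \<in> rank f ys)"
    unfolding selm_def by (rule LeastI_ex[OF ex])
  thus ?thesis by (auto simp: rank_def)
qed

lemma offs_mem:
  assumes "y \<in> set (offs n lam K x)"
  shows "\<exists>w \<in> set (List.n_lists (min K (n - length (dec x))) [True,False]).
     y = dec x @ w @ mk (n - length (dec x) - min K (n - length (dec x)))"
proof -
  let ?L = "List.n_lists (min K (n - length (dec x))) [True,False]"
  obtain c where y: "y = dec x @ ?L ! (c mod length ?L) @ mk (n - length (dec x) - min K (n - length (dec x)))"
    using assms by (auto simp: offs_def Let_def)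
  have "length ?L > 0" by (simp add: length_n_lists)
  hence "?L ! (c mod length ?L) \<in> set ?L" by (intro nth_mem) simp
  thus ?thesis using y by blast
qed

lemma valid_algK: "lam > 0 \<Longrightarrow> valid_alg1 n lam (algK n lam K)"
  unfolding valid_alg1_def
proof (intro conjI allI impI ballI)
  fix x assume "x \<in> set_pmf (a_init (algK n lam K))" thus "length x = n" by (simp add: algK_def)
next
  fix x ys assume lx: "length x = n" and "ys \<in> set_pmf (a_off (algK n lam K) x)"
  hence ys: "ys = offs n lam K x" by (simp add: algK_def)
  thus "length ys = lam" by (simp add: offs_def Let_def)
  fix y assume "y \<in> set ys"
  then obtain w where w: "w \<in> set (List.n_lists (min K (n - length (dec x))) [True,False])"
     "y = dec x @ w @ mk (n - length (dec x) - min K (n - length (dec x)))"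
    using ys offs_mem by blast
  have "length (dec x) \<le> n" using length_dec[of x] lx by simp
  then show "length y = n" using w by (auto dest: length_n_lists_elem)
next
  fix x :: "bool list" and ys :: "bool list list" and f :: "bool list \<Rightarrow> nat"
  assume "lam > 0" "length x = n" "length ys = lam" "\<forall>y\<in>set ys. length y = n"
  thus "set_pmf (a_sel (algK n lam K) x ys (rank f ys)) \<subseteq> {i. i < lam \<and> (\<forall>j<lam. f (ys ! j) \<le> f (ys ! i))}"
    using selm_best[of ys lam f] by (auto simp: algK_def)
qed


context
  fixes n lam K :: nat and z :: "bool list"
  assumes lz: "length z = n" and K1: "1 \<le> K" and KL: "2^K \<le> lam"
begin

lemma step_inl:
  assumes i: "i < n"
  shows "\<exists>s. step1 n lam (om z) (algK n lam K) t (Inl (take i z @ mk (n-i))) = return_pmf s \<and>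
    ((s = Inl (take (i+K) z @ mk (n-(i+K))) \<and> i+K < n) \<or> (\<exists>r. s = Inr (r, Suc t) \<and> r \<le> 1 + lam * Suc t))"
proof -
  define p where "p = take i z"
  define j where "j = min K (n - i)"
  define L where "L = List.n_lists j [True,False]"
  define ws where "ws = take j (drop i z)"
  define rest where "rest = mk (n - i - j)"
  define ys where "ys = map (\<lambda>c. p @ L ! (c mod length L) @ rest) [0..<lam]"
  have lp: "length p = i" using i lz by (simp add: p_def)
  have dx: "dec (p @ mk (n-i)) = p" using i by (simp add: dec_mk)
  have offs: "offs n lam K (p @ mk (n-i)) = ys"
    unfolding offs_def Let_def dx lp ys_def L_def j_def rest_def ..
  have j1: "1 \<le> j" "j \<le> K" "i + j \<le> n" using K1 i by (auto simp: j_def)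
  have lL: "length L = 2^j" by (simp add: L_def length_n_lists numeral_2_eq_2)
  have "2^j \<le> (2::nat)^K" using j1 by (intro power_increasing) auto
  hence lLlam: "length L \<le> lam" using KL lL by linarith
  have lws: "length ws = j" using j1 lz by (simp add: ws_def)
  have "ws \<in> set L" using lws by (auto simp: L_def set_n_lists)
  then obtain c where c: "c < length L" "L ! c = ws" by (auto simp: in_set_conv_nth)
  have lys: "length ys = lam" by (simp add: ys_def)
  have cl: "c < lam" using c lLlam by simp
  have ysc: "ys ! c = p @ ws @ rest" using c cl by (simp add: ys_def)
  have tk: "take (i+j) z = p @ ws" by (simp add: p_def ws_def take_add)
  have zdec: "z = p @ ws @ drop (i+j) z" using tk by (metis append_take_drop_id append_assoc)
  have ldrop: "length (drop (i+j) z) = n - i - j" using lz by simp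
  have lrest: "length rest = n - i - j" by (simp add: rest_def)
  have tp: "take i z = p" by (simp add: p_def)
  have step: "step1 n lam (om z) (algK n lam K) t (Inl (take i z @ mk (n-i))) =
     (if (\<exists>y \<in> set ys. is_opt n (om z) y)
       then return_pmf (Inr (1 + lam * t + Suc (LEAST k. k < length ys \<and> is_opt n (om z) (ys ! k)), Suc t))
       else return_pmf (Inl (ys ! selm lam (rank (om z) ys))))"
    unfolding tp by (simp add: step1_def algK_def offs bind_return_pmf)
  show ?thesis
  proof (cases "\<exists>y \<in> set ys. is_opt n (om z) y")
    case True
    then obtain k where k: "k < lam" "is_opt n (om z) (ys!k)" using lys by (auto simp: in_set_conv_nth)
    have "(LEAST k. k < length ys \<and> is_opt n (om z) (ys ! k)) \<le> k" using k lys by (intro Least_le) simp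
    hence "1 + lam*t + Suc (LEAST k. k < length ys \<and> is_opt n (om z) (ys ! k)) \<le> 1 + lam * Suc t"
      using k by simp
    thus ?thesis using True step by auto
  next
    case False
    have "ys ! c \<in> set ys" using cl lys by (intro nth_mem) simp
    hence ycz: "ys ! c \<noteq> z" using False is_opt_om[OF lz] by auto
    have nfin: "i + j \<noteq> n"
    proof
      assume e: "i + j = n"
      hence r0: "rest = []" by (simp add: rest_def mk_def)
      have "z = p @ ws" using tk e lz by simp
      thus False using ycz ysc r0 by simp
    qed
    hence jK: "j = K" and ijn: "i + K < n" using j_def j1 by auto
    define s where "s = selm lam (rank (om z) ys)"
    have lam0: "lam > 0" using KL order_less_le_trans[of 0 "(2::nat)^K" lam] by simp
    from selm_best[OF lys lam0, of "om z"]
    have s: "s < lam" "\<forall>k<lam. om z (ys!k) \<le> om z (ys!s)" by (simp_all add: s_def)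
    define w where "w = L ! (s mod length L)"
    have "length L > 0" using lL by simp
    hence "w \<in> set L" unfolding w_def by (intro nth_mem) simp
    hence lw: "length w = j" by (simp add: L_def set_n_lists)
    have yss: "ys ! s = p @ w @ rest" using s by (simp add: ys_def w_def)
    have le: "om z (ys!c) \<le> om z (ys!s)" using s cl by auto
    have zz: "hdist (p @ w' @ rest) z = hdist w' ws + hdist rest (drop (i+j) z)" if lw': "length w' = j" for w'
    proof -
      have "hdist (p @ w' @ rest) z = hdist (p @ w' @ rest) (p @ ws @ drop (i+j) z)"
        by (rule arg_cong[OF zdec])
      also have "\<dots> = hdist p p + hdist (w' @ rest) (ws @ drop (i+j) z)"
        by (rule hdist_append) simp
      also have "hdist (w' @ rest) (ws @ drop (i+j) z) = hdist w' ws + hdist rest (drop (i+j) z)"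
        using lw' lws by (intro hdist_append) simp
      finally show ?thesis by simp
    qed
    have hc: "hdist (ys!c) z = hdist rest (drop (i+j) z)" using zz[OF lws] ysc by simp
    have hs: "hdist (ys!s) z = hdist w ws + hdist rest (drop (i+j) z)" using zz[OF lw] yss by simp
    have lyc: "length (ys!c) = n" "length (ys!s) = n" using ysc yss lp lws lw lrest j1 by auto
    have "hdist (ys!s) z \<le> n" using hdist_le[of "ys!s" z] lz by simp
    hence "hdist w ws = 0" using le om_hdist[of "ys!c" z] om_hdist[of "ys!s" z] lyc lz hc hs by simp
    hence "w = ws" using hdist_0 lw lws by simp
    hence "ys ! s = take (i+K) z @ mk (n-(i+K))" using yss tk jK by (simp add: rest_def)
    thus ?thesis using False step ijn by (simp add: s_def)
  qed
qed

lemma run_inv: "\<exists>s. state1 n lam (om z) (algK n lam K) t = return_pmf s \<and>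
   ((s = Inl (take (t*K) z @ mk (n - t*K)) \<and> t*K < n) \<or>
    (\<exists>r g. s = Inr (r,g) \<and> r \<le> 1 + lam*g \<and> (g = 0 \<or> (g - 1)*K < n)))"
proof (induction t)
  case 0
  have "n = 0 \<Longrightarrow> mk n = z" using lz by (simp add: mk_def)
  hence "0 < n" if "mk n \<noteq> z" using that by (cases n) auto
  thus ?case by (auto simp: algK_def is_opt_om[OF lz])
next
  case (Suc t)
  then obtain s where s: "state1 n lam (om z) (algK n lam K) t = return_pmf s" and
    I: "(s = Inl (take (t*K) z @ mk (n - t*K)) \<and> t*K < n) \<or>
    (\<exists>r g. s = Inr (r,g) \<and> r \<le> 1 + lam*g \<and> (g = 0 \<or> (g - 1)*K < n))" by blast
  have st: "state1 n lam (om z) (algK n lam K) (Suc t) = step1 n lam (om z) (algK n lam K) t s"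
    using s by (simp add: bind_return_pmf)
  show ?case
  proof (cases "s = Inl (take (t*K) z @ mk (n - t*K)) \<and> t*K < n")
    case True
    from step_inl[of "t*K" t] True obtain s' where
      "step1 n lam (om z) (algK n lam K) t (Inl (take (t*K) z @ mk (n - t*K))) = return_pmf s'"
      "(s' = Inl (take (t*K+K) z @ mk (n-(t*K+K))) \<and> t*K+K < n) \<or> (\<exists>r. s' = Inr (r, Suc t) \<and> r \<le> 1 + lam * Suc t)"
      by blast
    thus ?thesis using True st by (auto simp: add.commute)
  next
    case False
    then obtain r g where "s = Inr (r,g)" "r \<le> 1 + lam*g" "(g = 0 \<or> (g - 1)*K < n)" using I by blast
    thus ?thesis using st by (simp add: step1_def)
  qed
qed

lemma final:
  assumes "n \<le> G*K"
  shows "\<exists>r g. state1 n lam (om z) (algK n lam K) G = return_pmf (Inr (r,g)) \<and> r \<le> 1 + lam*g \<and> g \<le> G"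
proof -
  from run_inv[of G] assms obtain r g where rg: "state1 n lam (om z) (algK n lam K) G = return_pmf (Inr (r,g))"
    "r \<le> 1 + lam*g" "g = 0 \<or> (g - 1)*K < n" by auto
  have "g \<le> G"
  proof (cases "g = 0")
    case False
    hence "(g - 1)*K < n" using rg(3) by simp
    hence "(g - 1)*K < G*K" using assms by linarith
    hence "g - 1 < G" using K1 by (simp add: mult_less_cancel2)
    thus ?thesis by simp
  qed simp
  thus ?thesis using rg by blast
qed

lemma gens_one:
  assumes "n \<le> G*K" "G \<le> k"
  shows "gens_le n lam (om z) (algK n lam K) k = 1"
proof -
  from final[OF assms(1)] obtain r g where rg:
    "state1 n lam (om z) (algK n lam K) G = return_pmf (Inr (r,g))" "g \<le> G" by blast
  show ?thesis unfolding gens_le_def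
  proof (rule antisym)
    show "(SUP t. ennreal (measure_pmf.prob (state1 n lam (om z) (algK n lam K) t) {s. \<exists>r g. s = Inr (r, g) \<and> g \<le> k})) \<le> 1"
      by (rule SUP_least) simp
    have "ennreal (measure_pmf.prob (state1 n lam (om z) (algK n lam K) G) {s. \<exists>r g. s = Inr (r, g) \<and> g \<le> k}) = 1"
      using rg assms by simp
    note e = this
    show "1 \<le> (SUP t. ennreal (measure_pmf.prob (state1 n lam (om z) (algK n lam K) t) {s. \<exists>r g. s = Inr (r, g) \<and> g \<le> k}))"
      by (rule SUP_upper2[of G]) (simp_all only: e UNIV_I order_refl)
  qed
qed

lemma runtime_one:
  assumes "n \<le> G*K" "1 + lam * G \<le> m"
  shows "runtime_le n lam (om z) (algK n lam K) m = 1"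
proof -
  from final[OF assms(1)] obtain r g where rg:
    "state1 n lam (om z) (algK n lam K) G = return_pmf (Inr (r,g))" "r \<le> 1 + lam*g" "g \<le> G" by blast
  have "lam * g \<le> lam * G" using rg by simp
  hence rm: "r \<le> m" using rg assms by linarith
  show ?thesis unfolding runtime_le_def
  proof (rule antisym)
    show "(SUP t. ennreal (measure_pmf.prob (state1 n lam (om z) (algK n lam K) t) {s. \<exists>r g. s = Inr (r, g) \<and> r \<le> m})) \<le> 1"
      by (rule SUP_least) simp
    have "ennreal (measure_pmf.prob (state1 n lam (om z) (algK n lam K) G) {s. \<exists>r g. s = Inr (r, g) \<and> r \<le> m}) = 1"
      using rg rm by simp
    note e = this
    show "1 \<le> (SUP t. ennreal (measure_pmf.prob (state1 n lam (om z) (algK n lam K) t) {s. \<exists>r g. s = Inr (r, g) \<and> r \<le> m}))"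
      by (rule SUP_upper2[of G]) (simp_all only: e UNIV_I order_refl)
  qed
qed

lemma exp_gens_le:
  assumes "n \<le> G*K"
  shows "exp_gens n lam (om z) (algK n lam K) \<le> of_nat G"
proof -
  have "exp_gens n lam (om z) (algK n lam K) = (\<Sum>k\<in>{..<G}. 1 - gens_le n lam (om z) (algK n lam K) k)"
    unfolding exp_gens_def by (rule suminf_finite) (auto simp: gens_one[OF assms])
  also have "\<dots> \<le> (\<Sum>k\<in>{..<G}. 1)" by (intro sum_mono) simp
  finally show ?thesis by simp
qed

lemma exp_runtime_le:
  assumes "n \<le> G*K"
  shows "exp_runtime n lam (om z) (algK n lam K) \<le> of_nat (1 + lam * G)"
proof -
  have "exp_runtime n lam (om z) (algK n lam K) = (\<Sum>k\<in>{..<1 + lam * G}. 1 - runtime_le n lam (om z) (algK n lam K) k)"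
    unfolding exp_runtime_def by (rule suminf_finite) (auto simp: runtime_one[OF assms])
  also have "\<dots> \<le> (\<Sum>k\<in>{..<1 + lam * G}. 1)" by (intro sum_mono) simp
  finally show ?thesis by simp
qed

end


lemma logK:
  assumes "(lam::nat) \<ge> 2"
  shows "1 \<le> nat \<lfloor>log 2 (real lam)\<rfloor> \<and> 2 ^ nat \<lfloor>log 2 (real lam)\<rfloor> \<le> lam"
proof -
  have lp: "real lam > 0" using assms by simp
  have l1: "1 \<le> log 2 (real lam)" using assms lp by (simp add: le_log_iff)
  hence f1: "1 \<le> \<lfloor>log 2 (real lam)\<rfloor>" by (simp add: le_floor_iff)
  define K where "K = nat \<lfloor>log 2 (real lam)\<rfloor>"
  have rK: "real K = of_int \<lfloor>log 2 (real lam)\<rfloor>" using f1 by (simp add: K_def)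
  have "real K \<le> log 2 (real lam)" using rK by simp
  hence "2 powr real K \<le> real lam" using lp by (simp add: le_log_iff)
  hence "real (2 ^ K) \<le> real lam" by (simp add: powr_realpow)
  hence K2: "2 ^ K \<le> lam" by linarith
  have K1: "1 \<le> K" using f1 by (simp add: K_def le_nat_iff)
  show ?thesis using K1 K2 unfolding K_def by blast
qed

lemma ceilK:
  assumes "(K::nat) \<ge> 1"
  shows "n \<le> nat \<lceil>real n / real K\<rceil> * K"
proof -
  have "0 \<le> real n / real K" by simp
  hence c0: "0 \<le> \<lceil>real n / real K\<rceil>" by (simp only: zero_le_ceiling)
  have h: "real n / real K \<le> of_int \<lceil>real n / real K\<rceil>" by simp
  have Kp: "0 < real K" using assms by simp
  have "real n / real K * real K \<le> of_int \<lceil>real n / real K\<rceil> * real K"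
    by (rule mult_right_mono[OF h]) simp
  hence "real n \<le> of_int \<lceil>real n / real K\<rceil> * real K" using Kp by simp
  also have "of_int \<lceil>real n / real K\<rceil> = real (nat \<lceil>real n / real K\<rceil>)" using c0 by simp
  finally have "real n \<le> real (nat \<lceil>real n / real K\<rceil> * K)" by simp
  thus ?thesis by linarith
qed

theorem theorem7:
  fixes n :: nat
  shows "LV_complexity_OM n 2 \<le> ennreal (2 * real n + 1) \<and>
    (\<exists>A. valid_alg1 n 2 A \<and>
       (\<forall>z. length z = n \<longrightarrow>
          exp_runtime n 2 (om z) A \<le> ennreal (2 * real n + 1) \<and>
          gens_le n 2 (om z) A (n + 1) = 1)) \<and>
    (\<forall>lam \<ge> 2. \<exists>A. valid_alg1 n lam A \<and>
       (\<forall>z. length z = n \<longrightarrow>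
          exp_gens n lam (om z) A \<le> of_nat (nat \<lceil>real n / real (nat \<lfloor>log 2 (real lam)\<rfloor>)\<rceil>))) \<and>
    (\<forall>lam \<ge> 2. \<exists>A. valid_alg1 n lam A \<and>
       (\<forall>z. length z = n \<longrightarrow>
          gens_le n lam (om z) A (nat \<lceil>real n / real (nat \<lfloor>log 2 (real lam)\<rfloor>)\<rceil>) = 1))"
proof -
  have v2: "valid_alg1 n 2 (algK n 2 1)" by (rule valid_algK) simp
  have P2: "exp_runtime n 2 (om z) (algK n 2 1) \<le> ennreal (2 * real n + 1) \<and>
          gens_le n 2 (om z) (algK n 2 1) (n + 1) = 1" if lz: "length z = n" for z
  proof
    have "exp_runtime n 2 (om z) (algK n 2 1) \<le> of_nat (1 + 2 * n)"
      using exp_runtime_le[OF lz, of 1 2 n] by simp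
    also have "(of_nat (1 + 2 * n) :: ennreal) = ennreal (2 * real n + 1)"
      by (simp add: ennreal_of_nat_eq_real_of_nat)
    finally show "exp_runtime n 2 (om z) (algK n 2 1) \<le> ennreal (2 * real n + 1)" .
    show "gens_le n 2 (om z) (algK n 2 1) (n + 1) = 1"
      using gens_one[OF lz, of 1 2 n "n+1"] by simp
  qed
  have L: "LV_complexity_OM n 2 \<le> ennreal (2 * real n + 1)"
    unfolding LV_complexity_OM_def
    by (rule INF_lower2[of "algK n 2 1"]) (use v2 P2 in \<open>auto intro!: SUP_least\<close>)
  have P3: "\<exists>A. valid_alg1 n lam A \<and>
       (\<forall>z. length z = n \<longrightarrow>
          exp_gens n lam (om z) A \<le> of_nat (nat \<lceil>real n / real (nat \<lfloor>log 2 (real lam)\<rfloor>)\<rceil>)) \<and>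
       (\<forall>z. length z = n \<longrightarrow>
          gens_le n lam (om z) A (nat \<lceil>real n / real (nat \<lfloor>log 2 (real lam)\<rfloor>)\<rceil>) = 1)"
    if lam: "lam \<ge> 2" for lam
  proof -
    define K where "K = nat \<lfloor>log 2 (real lam)\<rfloor>"
    have K: "1 \<le> K" "2^K \<le> lam" using logK[OF lam] by (simp_all add: K_def)
    have G: "n \<le> nat \<lceil>real n / real K\<rceil> * K" using ceilK[OF K(1)] .
    have a: "valid_alg1 n lam (algK n lam K)" using lam by (intro valid_algK) simp
    have b: "\<forall>z. length z = n \<longrightarrow> exp_gens n lam (om z) (algK n lam K) \<le> of_nat (nat \<lceil>real n / real K\<rceil>)"
      using exp_gens_le[OF _ K G] by blast
    have c: "\<forall>z. length z = n \<longrightarrow> gens_le n lam (om z) (algK n lam K) (nat \<lceil>real n / real K\<rceil>) = 1"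
      using gens_one[OF _ K G] by blast
    show ?thesis unfolding K_def[symmetric] by (rule exI[of _ "algK n lam K"]) (use a b c in simp)
  qed
  show ?thesis
  proof (intro conjI)
    show "LV_complexity_OM n 2 \<le> ennreal (2 * real n + 1)" by (rule L)
    show "\<exists>A. valid_alg1 n 2 A \<and>
       (\<forall>z. length z = n \<longrightarrow>
          exp_runtime n 2 (om z) A \<le> ennreal (2 * real n + 1) \<and>
          gens_le n 2 (om z) A (n + 1) = 1)"
      by (rule exI[of _ "algK n 2 1"]) (use v2 P2 in simp)
    show "\<forall>lam \<ge> 2. \<exists>A. valid_alg1 n lam A \<and>
       (\<forall>z. length z = n \<longrightarrow>
          exp_gens n lam (om z) A \<le> of_nat (nat \<lceil>real n / real (nat \<lfloor>log 2 (real lam)\<rfloor>)\<rceil>))"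
    proof (intro allI impI)
      fix lam :: nat assume "2 \<le> lam"
      from P3[OF this] obtain A where A: "valid_alg1 n lam A"
        "\<forall>z. length z = n \<longrightarrow>
          exp_gens n lam (om z) A \<le> of_nat (nat \<lceil>real n / real (nat \<lfloor>log 2 (real lam)\<rfloor>)\<rceil>)"
        by (elim exE conjE)
      show "\<exists>A. valid_alg1 n lam A \<and>
       (\<forall>z. length z = n \<longrightarrow>
          exp_gens n lam (om z) A \<le> of_nat (nat \<lceil>real n / real (nat \<lfloor>log 2 (real lam)\<rfloor>)\<rceil>))"
        by (rule exI[of _ A]) (use A in simp)
    qed
    show "\<forall>lam \<ge> 2. \<exists>A. valid_alg1 n lam A \<and>
       (\<forall>z. length z = n \<longrightarrow>
          gens_le n lam (om z) A (nat \<lceil>real n / real (nat \<lfloor>log 2 (real lam)\<rfloor>)\<rceil>) = 1)"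
    proof (intro allI impI)
      fix lam :: nat assume "2 \<le> lam"
      from P3[OF this] obtain A where A: "valid_alg1 n lam A"
        "\<forall>z. length z = n \<longrightarrow>
          gens_le n lam (om z) A (nat \<lceil>real n / real (nat \<lfloor>log 2 (real lam)\<rfloor>)\<rceil>) = 1"
        by (elim exE conjE)
      show "\<exists>A. valid_alg1 n lam A \<and>
       (\<forall>z. length z = n \<longrightarrow>
          gens_le n lam (om z) A (nat \<lceil>real n / real (nat \<lfloor>log 2 (real lam)\<rfloor>)\<rceil>) = 1)"
        by (rule exI[of _ A]) (use A in simp)
    qed
  qed
qed

end
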